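(* Let $\mathcal P=[p_1,\ldots,p_k]\in AP_{n,k}$. If $\mathrm{slack}(\mathcal P)<0$, then there is an index $j<k$ such that $p_j<p_{j+1}$ and $\mathrm{slack}(\mathcal P)=\mathrm{slack}_j(\mathcal P)$.
   Context: $s^{n,k}=\frac{n(n+1)}{2k}$. An ascending partition of $n$ of size $k$ is a sequence of positive integers $[p_1,\ldots,p_k]$ with $p_1\le\cdots\le p_k$ and $\sum_i p_i=n$; $AP_{n,k}$ is the set of all such partitions when $s^{n,k}$ is an integer (and empty otherwise). For $j=1,\ldots,k$, $\mathrm{slack}_j(\mathcal P)=\sum_{i=1}^{p_1+\cdots+p_j}(n-i+1)-j\,s^{n,k}$, and $\mathrm{slack}(\mathcal P)=\min_{1\le j\le k-1}\mathrm{slack}_j(\mathcal P)$. *)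

theory Defs
  imports Main "HOL.Real"
begin

definition s_nk :: "nat \<Rightarrow> nat \<Rightarrow> real" where
  "s_nk n k = real (n * (n + 1)) / (2 * real k)"

text \<open>Ascending partitions of n of size k, as lists [p_1,...,p_k] (list index i-1 holds p_i);
  empty unless s^{n,k} is an integer.\<close>
definition AP :: "nat \<Rightarrow> nat \<Rightarrow> nat list set" where
  "AP n k = {P. length P = k \<and> sorted P \<and> (\<forall>x\<in>set P. 0 < x) \<and> sum_list P = n
               \<and> s_nk n k \<in> \<int>}"

definition slack_j :: "nat \<Rightarrow> nat \<Rightarrow> nat list \<Rightarrow> nat \<Rightarrow> real" where
  "slack_j n k P j = (\<Sum>i = 1..sum_list (take j P). real n - real i + 1) - real j * s_nk n k"

definition slack :: "nat \<Rightarrow> nat \<Rightarrow> nat list \<Rightarrow> real" where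
  "slack n k P = Min ((slack_j n k P) ` {1..k-1})"

end

theory Submission
  imports Defs
begin

lemma F_closed: "(\<Sum>i = 1..m. real n - real i + 1) = real m * (real n + 1) - real m * (real m + 1) / 2"
  by (induction m) (auto simp: field_simps)

lemma take_suc_sum: "j < length P \<Longrightarrow> sum_list (take (Suc j) P) = sum_list (take j P) + P ! j"
  by (simp add: take_Suc_conv_app_nth)

theorem mainTheorem6:
  fixes n k :: nat and P :: "nat list"
  assumes "k \<ge> 2"
    and "P \<in> AP n k"
    and "slack n k P < 0"
  shows "\<exists>j. 1 \<le> j \<and> j < k \<and> P ! (j - 1) < P ! j \<and> slack n k P = slack_j n k P j"
proof -
  from assms(2) have len: "length P = k" and srt: "sorted P" and pos: "\<forall>x\<in>set P. 0 < x"
    and sm: "sum_list P = n" by (auto simp: AP_def)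
  define f where "f = slack_j n k P"
  have fe: "f j = real (sum_list (take j P)) * (real n + 1) - real (sum_list (take j P)) * (real (sum_list (take j P)) + 1) / 2 - real j * s_nk n k" for j
    unfolding f_def slack_j_def F_closed by simp
  have f0: "f 0 = 0" using fe[of 0] by simp
  have fk: "f k = 0" using fe[of k] len sm assms(1)
    by (simp add: s_nk_def field_simps)
  have fin: "finite (f ` {1..k-1})" "f ` {1..k-1} \<noteq> {}" using assms(1) by auto
  obtain j where j: "j \<in> {1..k-1}" "f j = slack n k P"
    using Min_in[OF fin] unfolding slack_def f_def by auto
  have minj: "\<And>i. i \<in> {1..k-1} \<Longrightarrow> f j \<le> f i"
    using fin j(2) unfolding slack_def f_def by auto
  have le: "P ! (j - 1) \<le> P ! j" using srt j(1) len assms(1)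
    by (intro sorted_nth_mono) auto
  show ?thesis
  proof (cases "P ! (j - 1) < P ! j")
    case True then show ?thesis using j unfolding f_def by (intro exI[of _ j]) auto
  next
    case False
    with le have eq: "P ! (j - 1) = P ! j" by simp
    define p where "p = P ! j"
    define a where "a = sum_list (take (j-1) P)"
    have jk: "j < k" "1 \<le> j" using j(1) assms(1) by auto
    have t1: "sum_list (take j P) = a + p"
      using take_suc_sum[of "j-1" P] jk len eq unfolding a_def p_def by simp
    have t2: "sum_list (take (j+1) P) = a + 2*p"
      using take_suc_sum[of j P] jk len t1 unfolding p_def by simp
    have ppos: "p > 0" using pos jk len unfolding p_def by (auto simp: in_set_conv_nth)
    have "f (j-1) + f (j+1) - 2 * f j = - (real p * real p)"
      using fe[of "j-1"] fe[of j] fe[of "j+1"] t1 t2 jk unfolding a_def[symmetric]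
      by (simp add: field_simps power2_eq_square of_nat_diff)
    with ppos have "f (j-1) < f j \<or> f (j+1) < f j" by (smt (verit) of_nat_0_less_iff mult_pos_pos)
    moreover have "f j < 0" using j(2) assms(3) by simp
    moreover have "\<not> f (j-1) < f j"
      using minj[of "j-1"] jk f0 \<open>f j < 0\<close> by (cases "j = 1") force+
    moreover have "\<not> f (j+1) < f j"
      using minj[of "j+1"] jk fk \<open>f j < 0\<close> by (cases "j + 1 = k") force+
    ultimately show ?thesis by blast
  qed
qed

end
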